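(* Assume $|\mathcal S|\ge2$ and let $\epsilon,\delta,\tau>0$. Consider the following procedure (Tau-Push, DPPR part): set $r_{max}=\frac{\epsilon\delta}{m\tau}$; for each $\mathcal V_i\in\mathcal S$ run GFP$(G,\mathcal S,\mathcal V_i,r_{max})$ and record its outputs $\hat\pi_d(\mathcal V_i,\mathcal V_j)$ for all $\mathcal V_j\in\mathcal S$; then for each $\mathcal V_j\in\mathcal S$ with $\tau_j>\tau$, run GBP$(G,\mathcal S,\mathcal V_j,r^b_{max}(\mathcal V_j))$ with $r^b_{max}(\mathcal V_j)=\epsilon\delta\big/\max_{\mathcal V_i\in\mathcal S\setminus\{\mathcal V_j\}}\frac{1}{|F(\mathcal V_i)|}\sum_{v_s\in F(\mathcal V_i)}d(v_s)$, and replace the recorded $\hat\pi_d(\mathcal V_i,\mathcal V_j)$ by the GBP output for every $\mathcal V_i\in\mathcal S$. Then the procedure terminates and, for all $\mathcal V_i,\mathcal V_j\in\mathcal S$ with $\mathcal V_i\ne\mathcal V_j$, the final value $\hat\pi_d(\mathcal V_i,\mathcal V_j)$ is an $(\epsilon,\delta)$-approximation of $\pi_d(\mathcal V_i,\mathcal V_j)$.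
   Context: $G=(V,E)$ is a directed graph with $n$ nodes and $m$ edges, no self-loops, and every node of out-degree $d(v)\ge1$; $\alpha\in(0,1)$. PPR $\pi(u,v)$: probability that a random walk from $u$ which at each step stops with probability $\alpha$ and otherwise moves to a uniformly random out-neighbor stops at $v$; $\pi_d(u,v)=d(u)\pi(u,v)$. A collection $\mathcal S=\{\mathcal V_1,\dots,\mathcal V_k\}$ of supernodes is given, each $\mathcal V_i$ having a nonempty leaf set $F(\mathcal V_i)\subseteq V$, the leaf sets being pairwise disjoint. For supernodes, $\pi_d(\mathcal V_i,\mathcal V_j)=\frac{1}{|F(\mathcal V_i)||F(\mathcal V_j)|}\sum_{v_s\in F(\mathcal V_i),v_t\in F(\mathcal V_j)}\pi_d(v_s,v_t)$. The degree-normalized PageRank of $\mathcal V_j$ is $\tau_j=\frac{1}{m|F(\mathcal V_j)|}\sum_{v_t\in F(\mathcal V_j)}\sum_{v_k\in V}\pi_d(v_k,v_t)$. A value $\hat x$ is an $(\epsilon,\delta)$-approximation of $x\ge0$ if $|\hat x-x|\le\epsilon\delta$ when $x<\delta$, and $|\hat x-x|\le\epsilon x$ when $x\ge\delta$. Procedure GFP$(G,\mathcal S,\mathcal V_i,r_{max})$: set $\hat\pi_d(\mathcal V_i,\mathcal V_j)=0$ for all $\mathcal V_j\in\mathcal S$; set $r(\mathcal V_i,v)=d(v)/|F(\mathcal V_i)|$ for $v\in F(\mathcal V_i)$ and $0$ otherwise. While some $v_k$ has $r(\mathcal V_i,v_k)>d(v_k)\,r_{max}$, pick any such $v_k$ and: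 if $v_k\in F(\mathcal V_j)$ for some $\mathcal V_j\in\mathcal S$, add $\alpha\,r(\mathcal V_i,v_k)/|F(\mathcal V_j)|$ to $\hat\pi_d(\mathcal V_i,\mathcal V_j)$; for each out-neighbor $v_j$ of $v_k$ add $(1-\alpha)\,r(\mathcal V_i,v_k)/d(v_k)$ to $r(\mathcal V_i,v_j)$; then set $r(\mathcal V_i,v_k)=0$. Output $\hat\pi_d(\mathcal V_i,\cdot)$. Procedure GBP$(G,\mathcal S,\mathcal V_j,r^b_{max})$: set $\hat\pi_d(\mathcal V_i,\mathcal V_j)=0$ for all $\mathcal V_i\in\mathcal S$; set $r(v,\mathcal V_j)=1/|F(\mathcal V_j)|$ for $v\in F(\mathcal V_j)$ and $0$ otherwise. While some $v_k$ has $r(v_k,\mathcal V_j)>r^b_{max}$, pick any such $v_k$ and: if $v_k\in F(\mathcal V_i)$ for some $\mathcal V_i\in\mathcal S$, add $\alpha\,d(v_k)\,r(v_k,\mathcal V_j)/|F(\mathcal V_i)|$ to $\hat\pi_d(\mathcal V_i,\mathcal V_j)$; for each in-neighbor $v_i$ of $v_k$ add $(1-\alpha)\,r(v_k,\mathcal V_j)/d(v_i)$ to $r(v_i,\mathcal V_j)$; then set $r(v_k,\mathcal V_j)=0$. Output $\hat\pi_d(\cdot,\mathcal V_j)$. *)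

theory Defs
  imports Complex_Main
begin

definition outN :: "('v \<times> 'v) set \<Rightarrow> 'v \<Rightarrow> 'v set" where
  "outN E u = {w. (u, w) \<in> E}"

definition inN :: "('v \<times> 'v) set \<Rightarrow> 'v \<Rightarrow> 'v set" where
  "inN E u = {w. (w, u) \<in> E}"

definition outdeg :: "('v \<times> 'v) set \<Rightarrow> 'v \<Rightarrow> nat" where
  "outdeg E u = card (outN E u)"

primrec walkp :: "('v \<times> 'v) set \<Rightarrow> nat \<Rightarrow> 'v \<Rightarrow> 'v \<Rightarrow> real" where
  "walkp E 0 u v = (if u = v then 1 else 0)"
| "walkp E (Suc k) u v = (\<Sum>w\<in>outN E u. walkp E k w v) / real (outdeg E u)"

(* PPR: the walk stops after exactly k moves with probability alpha (1-alpha)^k *)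
definition ppr :: "('v \<times> 'v) set \<Rightarrow> real \<Rightarrow> 'v \<Rightarrow> 'v \<Rightarrow> real" where
  "ppr E \<alpha> u v = (\<Sum>k. \<alpha> * (1 - \<alpha>) ^ k * walkp E k u v)"

definition pprd :: "('v \<times> 'v) set \<Rightarrow> real \<Rightarrow> 'v \<Rightarrow> 'v \<Rightarrow> real" where
  "pprd E \<alpha> u v = real (outdeg E u) * ppr E \<alpha> u v"

(* supernode-level degree-normalised PPR; supernodes indexed by 'i, leaf sets F i *)
definition pprd_super :: "('v \<times> 'v) set \<Rightarrow> real \<Rightarrow> ('i \<Rightarrow> 'v set) \<Rightarrow> 'i \<Rightarrow> 'i \<Rightarrow> real" where
  "pprd_super E \<alpha> F i j =
     (\<Sum>s\<in>F i. \<Sum>t\<in>F j. pprd E \<alpha> s t) / (real (card (F i)) * real (card (F j)))"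

definition dpr :: "'v set \<Rightarrow> ('v \<times> 'v) set \<Rightarrow> real \<Rightarrow> ('i \<Rightarrow> 'v set) \<Rightarrow> 'i \<Rightarrow> real" where
  "dpr V E \<alpha> F j =
     (\<Sum>t\<in>F j. \<Sum>k\<in>V. pprd E \<alpha> k t) / (real (card E) * real (card (F j)))"

definition approx :: "real \<Rightarrow> real \<Rightarrow> real \<Rightarrow> real \<Rightarrow> bool" where
  "approx \<epsilon> \<delta> xh x =
     (if x < \<delta> then \<bar>xh - x\<bar> \<le> \<epsilon> * \<delta> else \<bar>xh - x\<bar> \<le> \<epsilon> * x)"

(* state: (estimates hat(V_i, .) indexed by 'i, residues r(V_i, .) indexed by vertices) *)

definition gfp_init :: "('v \<times> 'v) set \<Rightarrow> ('i \<Rightarrow> 'v set) \<Rightarrow> 'i \<Rightarrow> ('i \<Rightarrow> real) \<times> ('v \<Rightarrow> real)" where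
  "gfp_init E F i =
     (\<lambda>j. 0, \<lambda>v. if v \<in> F i then real (outdeg E v) / real (card (F i)) else 0)"

definition gfp_step :: "'v set \<Rightarrow> ('v \<times> 'v) set \<Rightarrow> 'i set \<Rightarrow> ('i \<Rightarrow> 'v set) \<Rightarrow> real \<Rightarrow> real
    \<Rightarrow> ('i \<Rightarrow> real) \<times> ('v \<Rightarrow> real) \<Rightarrow> ('i \<Rightarrow> real) \<times> ('v \<Rightarrow> real) \<Rightarrow> bool" where
  "gfp_step V E I F \<alpha> rmax st st' =
     (\<exists>vk\<in>V. snd st vk > real (outdeg E vk) * rmax \<and>
        fst st' = (\<lambda>j. if j \<in> I \<and> vk \<in> F j
                        then fst st j + \<alpha> * snd st vk / real (card (F j)) else fst st j) \<and>
        snd st' = (\<lambda>v. if v = vk then 0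
                        else snd st v + (if v \<in> outN E vk
                                          then (1 - \<alpha>) * snd st vk / real (outdeg E vk) else 0)))"

definition gfp_output :: "'v set \<Rightarrow> ('v \<times> 'v) set \<Rightarrow> 'i set \<Rightarrow> ('i \<Rightarrow> 'v set) \<Rightarrow> real \<Rightarrow> real
    \<Rightarrow> 'i \<Rightarrow> ('i \<Rightarrow> real) \<Rightarrow> bool" where
  "gfp_output V E I F \<alpha> rmax i h =
     (\<exists>r. (gfp_step V E I F \<alpha> rmax)\<^sup>*\<^sup>* (gfp_init E F i) (h, r) \<and>
          \<not> (\<exists>st'. gfp_step V E I F \<alpha> rmax (h, r) st'))"

(* state: (estimates hat(., V_j) indexed by 'i, residues r(., V_j) indexed by vertices) *)

definition gbp_init :: "('i \<Rightarrow> 'v set) \<Rightarrow> 'i \<Rightarrow> ('i \<Rightarrow> real) \<times> ('v \<Rightarrow> real)" where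
  "gbp_init F j = (\<lambda>i. 0, \<lambda>v. if v \<in> F j then 1 / real (card (F j)) else 0)"

definition gbp_step :: "'v set \<Rightarrow> ('v \<times> 'v) set \<Rightarrow> 'i set \<Rightarrow> ('i \<Rightarrow> 'v set) \<Rightarrow> real \<Rightarrow> real
    \<Rightarrow> ('i \<Rightarrow> real) \<times> ('v \<Rightarrow> real) \<Rightarrow> ('i \<Rightarrow> real) \<times> ('v \<Rightarrow> real) \<Rightarrow> bool" where
  "gbp_step V E I F \<alpha> rbmax st st' =
     (\<exists>vk\<in>V. snd st vk > rbmax \<and>
        fst st' = (\<lambda>i. if i \<in> I \<and> vk \<in> F i
                        then fst st i + \<alpha> * real (outdeg E vk) * snd st vk / real (card (F i))
                        else fst st i) \<and>
        snd st' = (\<lambda>v. if v = vk then 0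
                        else snd st v + (if v \<in> inN E vk
                                          then (1 - \<alpha>) * snd st vk / real (outdeg E v) else 0)))"

definition gbp_output :: "'v set \<Rightarrow> ('v \<times> 'v) set \<Rightarrow> 'i set \<Rightarrow> ('i \<Rightarrow> 'v set) \<Rightarrow> real \<Rightarrow> real
    \<Rightarrow> 'i \<Rightarrow> ('i \<Rightarrow> real) \<Rightarrow> bool" where
  "gbp_output V E I F \<alpha> rbmax j h =
     (\<exists>r. (gbp_step V E I F \<alpha> rbmax)\<^sup>*\<^sup>* (gbp_init F j) (h, r) \<and>
          \<not> (\<exists>st'. gbp_step V E I F \<alpha> rbmax (h, r) st'))"

definition terminates :: "('s \<Rightarrow> 's \<Rightarrow> bool) \<Rightarrow> 's \<Rightarrow> bool" where
  "terminates step st0 = (\<nexists>f. f 0 = st0 \<and> (\<forall>k. step (f k) (f (Suc k))))"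

definition rmax_tau :: "('v \<times> 'v) set \<Rightarrow> real \<Rightarrow> real \<Rightarrow> real \<Rightarrow> real" where
  "rmax_tau E \<epsilon> \<delta> \<tau> = \<epsilon> * \<delta> / (real (card E) * \<tau>)"

definition rbmax_tau :: "('v \<times> 'v) set \<Rightarrow> 'i set \<Rightarrow> ('i \<Rightarrow> 'v set) \<Rightarrow> real \<Rightarrow> real \<Rightarrow> 'i \<Rightarrow> real" where
  "rbmax_tau E I F \<epsilon> \<delta> j =
     \<epsilon> * \<delta> / Max ((\<lambda>i. (\<Sum>s\<in>F i. real (outdeg E s)) / real (card (F i))) ` (I - {j}))"

end

theory Submission imports Defs begin

lemma walkp_nonneg: "walkp E k u v \<ge> 0"
  by (induction k arbitrary: u) (auto intro!: divide_nonneg_nonneg sum_nonneg)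

locale G =
  fixes V :: "'v set" and E :: "('v \<times> 'v) set" and \<alpha> :: real
  assumes finV: "finite V" and EV: "E \<subseteq> V \<times> V" and noloop: "\<forall>v. (v, v) \<notin> E"
    and outdeg_pos: "\<forall>v\<in>V. outdeg E v \<ge> 1" and alpha0: "0 < \<alpha>" and alpha1: "\<alpha> < 1"
begin

lemma out_sub: "outN E u \<subseteq> V" using EV by (auto simp: outN_def)
lemma in_sub: "inN E u \<subseteq> V" using EV by (auto simp: inN_def)
lemma fin_out: "finite (outN E u)" using out_sub finV finite_subset by blast
lemma fin_in: "finite (inN E u)" using in_sub finV finite_subset by blast
lemma not_out_self: "u \<notin> outN E u" using noloop by (auto simp: outN_def)
lemma not_in_self: "u \<notin> inN E u" using noloop by (auto simp: inN_def)
lemma d_pos: "u \<in> V \<Longrightarrow> real (outdeg E u) > 0" using outdeg_pos by force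
lemma card_out: "real (card (outN E u)) = real (outdeg E u)" by (simp add: outdeg_def)

lemma walkp_sum: "u \<in> V \<Longrightarrow> (\<Sum>v\<in>V. walkp E k u v) = 1"
proof (induction k arbitrary: u)
  case 0
  then show ?case using finV by simp
next
  case (Suc k)
  have "(\<Sum>v\<in>V. walkp E (Suc k) u v) = (\<Sum>w\<in>outN E u. \<Sum>v\<in>V. walkp E k w v) / real (outdeg E u)"
    by (simp add: sum_divide_distrib[symmetric] sum.swap[of _ V])
  also have "\<dots> = real (card (outN E u)) / real (outdeg E u)"
    using Suc.IH out_sub by (simp add: subset_iff)
  also have "\<dots> = 1" using d_pos[OF Suc.prems] card_out by simp
  finally show ?case .
qed

lemma walkp_outside: "u \<in> V \<Longrightarrow> v \<notin> V \<Longrightarrow> walkp E k u v = 0"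
proof (induction k arbitrary: u)
  case 0 then show ?case by auto
next
  case (Suc k) then show ?case using out_sub by (auto intro!: sum.neutral)
qed

lemma walkp_le1: "u \<in> V \<Longrightarrow> walkp E k u v \<le> 1"
proof (cases "v \<in> V")
  case True
  assume u: "u \<in> V"
  have "walkp E k u v \<le> (\<Sum>v\<in>V. walkp E k u v)"
    by (rule member_le_sum) (use True finV walkp_nonneg in auto)
  then show ?thesis using walkp_sum[OF u] by simp
next
  case False
  assume u: "u \<in> V"
  then show ?thesis using walkp_outside[OF u False] by simp
qed

definition P :: "'v \<Rightarrow> 'v \<Rightarrow> real" where
  "P x t = (if t \<in> outN E x then 1 / real (outdeg E x) else 0)"

lemma walkp_lastV: "u \<in> V \<Longrightarrow> walkp E (Suc k) u t = (\<Sum>x\<in>V. walkp E k u x * P x t)"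
proof (induction k arbitrary: u)
  case 0
  have "(\<Sum>w\<in>outN E u. (if w = t then 1 else 0 :: real)) = (if t \<in> outN E u then 1 else 0)"
    using fin_out by (simp add: sum.delta)
  then show ?case using 0 finV by (simp add: P_def if_distrib[of "\<lambda>x. x * _"] sum.delta cong: if_cong)
next
  case (Suc k)
  have "walkp E (Suc (Suc k)) u t = (\<Sum>w\<in>outN E u. \<Sum>x\<in>V. walkp E k w x * P x t) / real (outdeg E u)"
    using Suc.IH out_sub by (simp add: subset_iff)
  also have "\<dots> = (\<Sum>x\<in>V. (\<Sum>w\<in>outN E u. walkp E k w x) / real (outdeg E u) * P x t)"
    by (simp add: sum_divide_distrib sum_distrib_right sum.swap[of _ "outN E u"])
  also have "\<dots> = (\<Sum>x\<in>V. walkp E (Suc k) u x * P x t)" by simp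
  finally show ?case .
qed

lemma walkp_last: "u \<in> V \<Longrightarrow> walkp E (Suc k) u t = (\<Sum>x\<in>inN E t. walkp E k u x / real (outdeg E x))"
proof -
  assume u: "u \<in> V"
  have "(\<Sum>x\<in>V. walkp E k u x * P x t) = (\<Sum>x\<in>V. if x \<in> inN E t then walkp E k u x / real (outdeg E x) else 0)"
    by (rule sum.cong) (auto simp: P_def outN_def inN_def)
  also have "\<dots> = (\<Sum>x\<in>V \<inter> inN E t. walkp E k u x / real (outdeg E x))"
    using finV by (simp add: sum.inter_restrict)
  also have "V \<inter> inN E t = inN E t" using in_sub by blast
  finally show ?thesis using walkp_lastV[OF u] by simp
qed

lemma ppr_summable: "u \<in> V \<Longrightarrow> summable (\<lambda>k. \<alpha> * (1 - \<alpha>) ^ k * walkp E k u v)"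
proof -
  assume u: "u \<in> V"
  have g: "summable (\<lambda>k. \<alpha> * (1 - \<alpha>) ^ k)"
    using alpha0 alpha1 by (intro summable_mult summable_geometric) auto
  show ?thesis
  proof (rule summable_comparison_test'[OF g])
    fix k
    have "0 \<le> walkp E k u v" "walkp E k u v \<le> 1" using walkp_nonneg walkp_le1[OF u] by auto
    moreover have "0 \<le> \<alpha> * (1 - \<alpha>) ^ k" using alpha0 alpha1 by simp
    moreover have "\<bar>\<alpha>\<bar> = \<alpha>" "\<bar>(1 - \<alpha>) ^ k\<bar> = (1 - \<alpha>) ^ k" using alpha0 alpha1 by auto
    ultimately show "norm (\<alpha> * (1 - \<alpha>) ^ k * walkp E k u v) \<le> \<alpha> * (1 - \<alpha>) ^ k"
      by (simp add: abs_mult mult_left_le)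
  qed
qed

lemma ppr_nonneg: "u \<in> V \<Longrightarrow> ppr E \<alpha> u v \<ge> 0"
  unfolding ppr_def using alpha0 alpha1
  by (intro suminf_nonneg ppr_summable) (auto intro!: mult_nonneg_nonneg walkp_nonneg)

lemma ppr_sum: "u \<in> V \<Longrightarrow> (\<Sum>v\<in>V. ppr E \<alpha> u v) = 1"
proof -
  assume u: "u \<in> V"
  have "(\<Sum>v\<in>V. ppr E \<alpha> u v) = (\<Sum>k. \<Sum>v\<in>V. \<alpha> * (1 - \<alpha>) ^ k * walkp E k u v)"
    unfolding ppr_def by (rule suminf_sum[symmetric]) (rule ppr_summable[OF u])
  also have "\<dots> = (\<Sum>k. \<alpha> * (1 - \<alpha>) ^ k)"
    by (simp add: sum_distrib_left[symmetric] walkp_sum[OF u])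
  also have "\<dots> = \<alpha> * (\<Sum>k. (1 - \<alpha>) ^ k)"
    using alpha0 alpha1 by (intro suminf_mult summable_geometric) auto
  also have "\<dots> = 1" using alpha0 alpha1 by (subst suminf_geometric) auto
  finally show ?thesis .
qed

lemma ppr_fwd: "u \<in> V \<Longrightarrow> ppr E \<alpha> u t =
   \<alpha> * (if u = t then 1 else 0) + (1 - \<alpha>) / real (outdeg E u) * (\<Sum>w\<in>outN E u. ppr E \<alpha> w t)"
proof -
  assume u: "u \<in> V"
  define f where "f k = \<alpha> * (1 - \<alpha>) ^ k * walkp E k u t" for k
  have sf: "summable f" unfolding f_def by (rule ppr_summable[OF u])
  have "ppr E \<alpha> u t = suminf f" unfolding f_def ppr_def ..
  also have "\<dots> = f 0 + (\<Sum>k. f (Suc k))" using suminf_split_head[OF sf] by simp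
  also have "(\<Sum>k. f (Suc k)) = (\<Sum>k. (1 - \<alpha>) / real (outdeg E u) *
       (\<Sum>w\<in>outN E u. \<alpha> * (1 - \<alpha>) ^ k * walkp E k w t))"
  proof -
    have "\<And>k. f (Suc k) = (1 - \<alpha>) / real (outdeg E u) *
       (\<Sum>w\<in>outN E u. \<alpha> * (1 - \<alpha>) ^ k * walkp E k w t)"
      unfolding f_def by (simp add: sum_distrib_left[symmetric])
    then show ?thesis by simp
  qed
  also have "\<dots> = (1 - \<alpha>) / real (outdeg E u) * (\<Sum>k. \<Sum>w\<in>outN E u. \<alpha> * (1 - \<alpha>) ^ k * walkp E k w t)"
    using out_sub by (intro suminf_mult summable_sum ppr_summable) auto
  also have "(\<Sum>k. \<Sum>w\<in>outN E u. \<alpha> * (1 - \<alpha>) ^ k * walkp E k w t) = (\<Sum>w\<in>outN E u. ppr E \<alpha> w t)"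
    unfolding ppr_def using out_sub by (intro suminf_sum ppr_summable) auto
  finally show ?thesis by (simp add: f_def)
qed

lemma ppr_bwd: "u \<in> V \<Longrightarrow> ppr E \<alpha> u t =
   \<alpha> * (if u = t then 1 else 0) + (1 - \<alpha>) * (\<Sum>x\<in>inN E t. ppr E \<alpha> u x / real (outdeg E x))"
proof -
  assume u: "u \<in> V"
  define f where "f k = \<alpha> * (1 - \<alpha>) ^ k * walkp E k u t" for k
  have sf: "summable f" unfolding f_def by (rule ppr_summable[OF u])
  have "ppr E \<alpha> u t = suminf f" unfolding f_def ppr_def ..
  also have "\<dots> = f 0 + (\<Sum>k. f (Suc k))" using suminf_split_head[OF sf] by simp
  also have "(\<Sum>k. f (Suc k)) = (\<Sum>k. (1 - \<alpha>) *
       (\<Sum>x\<in>inN E t. (\<alpha> * (1 - \<alpha>) ^ k * walkp E k u x) / real (outdeg E x)))"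
  proof -
    have "\<And>k. f (Suc k) = (1 - \<alpha>) *
       (\<Sum>x\<in>inN E t. (\<alpha> * (1 - \<alpha>) ^ k * walkp E k u x) / real (outdeg E x))"
      unfolding f_def walkp_last[OF u] by (simp add: sum_distrib_left[symmetric] sum_divide_distrib[symmetric] sum_distrib_left mult_ac)
    then show ?thesis by simp
  qed
  also have "\<dots> = (1 - \<alpha>) * (\<Sum>k. \<Sum>x\<in>inN E t. (\<alpha> * (1 - \<alpha>) ^ k * walkp E k u x) / real (outdeg E x))"
    using u by (intro suminf_mult summable_sum summable_divide ppr_summable) auto
  also have "(\<Sum>k. \<Sum>x\<in>inN E t. (\<alpha> * (1 - \<alpha>) ^ k * walkp E k u x) / real (outdeg E x))
      = (\<Sum>x\<in>inN E t. (\<Sum>k. \<alpha> * (1 - \<alpha>) ^ k * walkp E k u x) / real (outdeg E x))"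
  proof -
    have "(\<Sum>k. \<Sum>x\<in>inN E t. (\<alpha> * (1 - \<alpha>) ^ k * walkp E k u x) / real (outdeg E x))
       = (\<Sum>x\<in>inN E t. \<Sum>k. (\<alpha> * (1 - \<alpha>) ^ k * walkp E k u x) / real (outdeg E x))"
      using u by (intro suminf_sum summable_divide ppr_summable)
    also have "\<dots> = (\<Sum>x\<in>inN E t. (\<Sum>k. \<alpha> * (1 - \<alpha>) ^ k * walkp E k u x) / real (outdeg E x))"
      using u by (intro sum.cong refl suminf_divide ppr_summable)
    finally show ?thesis .
  qed
  finally show ?thesis by (simp add: f_def ppr_def)
qed

end

lemma push_sum:
  fixes g r c :: "'v \<Rightarrow> real"
  assumes "finite V" "vk \<in> V" "N \<subseteq> V" "vk \<notin> N"
  shows "(\<Sum>v\<in>V. g v * (if v = vk then 0 else r v + (if v \<in> N then c v else 0)))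
       = (\<Sum>v\<in>V. g v * r v) - g vk * r vk + (\<Sum>v\<in>N. g v * c v)"
proof -
  have "(\<Sum>v\<in>V. g v * (if v = vk then 0 else r v + (if v \<in> N then c v else 0)))
      = (\<Sum>v\<in>V. g v * r v - (if v = vk then g vk * r vk else 0) + (if v \<in> N then g v * c v else 0))"
    using assms by (intro sum.cong) (auto simp: distrib_left)
  also have "\<dots> = (\<Sum>v\<in>V. g v * r v) - (\<Sum>v\<in>V. (if v = vk then g vk * r vk else 0)) + (\<Sum>v\<in>V. (if v \<in> N then g v * c v else 0))"
    by (simp add: sum.distrib sum_subtractf)
  also have "(\<Sum>v\<in>V. (if v = vk then g vk * r vk else 0)) = g vk * r vk" using assms by simp
  also have "(\<Sum>v\<in>V. (if v \<in> N then g v * c v else 0)) = (\<Sum>v\<in>V \<inter> N. g v * c v)"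
    using assms by (simp add: sum.inter_restrict)
  also have "V \<inter> N = N" using assms by blast
  finally show ?thesis .
qed

lemma terminates_pot:
  assumes P0: "Q s0" and pres: "\<And>s s'. Q s \<Longrightarrow> step s s' \<Longrightarrow> Q s'"
    and nn: "\<And>s. Q s \<Longrightarrow> \<Phi> s \<ge> (0::real)"
    and dec: "\<And>s s'. Q s \<Longrightarrow> step s s' \<Longrightarrow> \<Phi> s' \<le> \<Phi> s - c" and c: "c > 0"
  shows "terminates step s0"
  unfolding terminates_def
proof
  assume "\<exists>f. f 0 = s0 \<and> (\<forall>k. step (f k) (f (Suc k)))"
  then obtain f where f0: "f 0 = s0" and fs: "\<forall>k. step (f k) (f (Suc k))" by blast
  have *: "Q (f k) \<and> \<Phi> (f k) \<le> \<Phi> s0 - real k * c" for k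
  proof (induction k)
    case 0 then show ?case using P0 f0 by simp
  next
    case (Suc k)
    then have "Q (f (Suc k))" "\<Phi> (f (Suc k)) \<le> \<Phi> (f k) - c" using pres dec fs by blast+
    then show ?case using Suc by (simp add: algebra_simps)
  qed
  obtain k where "\<Phi> s0 < real k * c" using reals_Archimedean3[OF c] by blast
  with *[of k] nn[of "f k"] show False by linarith
qed

lemma reach_inv:
  assumes "step\<^sup>*\<^sup>* s0 s" "Q s0" "\<And>s s'. Q s \<Longrightarrow> step s s' \<Longrightarrow> Q s'"
  shows "Q s"
  using assms by (induction rule: rtranclp_induct) auto

lemma approx_intro:
  assumes "0 \<le> x - xh" "x - xh \<le> \<epsilon> * \<delta>" "\<epsilon> > 0"
  shows "approx \<epsilon> \<delta> xh x"
proof (cases "x < \<delta>")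
  case True then show ?thesis using assms by (simp add: approx_def)
next
  case False
  then have "\<epsilon> * \<delta> \<le> \<epsilon> * x" using assms by (intro mult_left_mono) auto
  then have "x - xh \<le> \<epsilon> * x" using assms by linarith
  then show ?thesis using assms False unfolding approx_def by auto
qed

locale G2 = G V E \<alpha> for V :: "'v set" and E and \<alpha> +
  fixes I :: "'i set" and F :: "'i \<Rightarrow> 'v set"
  assumes finI: "finite I" and F_ne: "\<forall>i\<in>I. F i \<noteq> {}" and F_sub: "\<forall>i\<in>I. F i \<subseteq> V"
begin

lemma finF: "j \<in> I \<Longrightarrow> finite (F j)" using F_sub finV finite_subset by blast
lemma cardF: "j \<in> I \<Longrightarrow> real (card (F j)) > 0" using finF F_ne by (simp add: card_gt_0_iff)

definition q :: "'i \<Rightarrow> 'v \<Rightarrow> real" where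
  "q j v = (\<Sum>t\<in>F j. ppr E \<alpha> v t) / real (card (F j))"

lemma q_nonneg: "v \<in> V \<Longrightarrow> q j v \<ge> 0"
  unfolding q_def by (intro divide_nonneg_nonneg sum_nonneg ppr_nonneg) auto

lemma q_rec: assumes "j \<in> I" "vk \<in> V"
  shows "q j vk = \<alpha> * (if vk \<in> F j then 1 else 0) / real (card (F j))
     + (1 - \<alpha>) / real (outdeg E vk) * (\<Sum>w\<in>outN E vk. q j w)"
proof -
  have "(\<Sum>t\<in>F j. ppr E \<alpha> vk t) = (\<Sum>t\<in>F j. \<alpha> * (if vk = t then 1 else 0)) +
      (1 - \<alpha>) / real (outdeg E vk) * (\<Sum>t\<in>F j. \<Sum>w\<in>outN E vk. ppr E \<alpha> w t)"
    by (simp add: ppr_fwd[OF assms(2)] sum.distrib sum_distrib_left)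
  also have "(\<Sum>t\<in>F j. \<alpha> * (if vk = t then 1 else 0)) = \<alpha> * (if vk \<in> F j then 1 else 0)"
    using finF[OF assms(1)] by (simp add: sum_distrib_left[symmetric])
  also have "(\<Sum>t\<in>F j. \<Sum>w\<in>outN E vk. ppr E \<alpha> w t) = (\<Sum>w\<in>outN E vk. \<Sum>t\<in>F j. ppr E \<alpha> w t)"
    by (rule sum.swap)
  finally show ?thesis unfolding q_def
    by (simp add: add_divide_distrib sum_divide_distrib[symmetric])
qed

definition FInv :: "'i \<Rightarrow> ('i \<Rightarrow> real) \<times> ('v \<Rightarrow> real) \<Rightarrow> bool" where
  "FInv i st = ((\<forall>v. 0 \<le> snd st v) \<and> (\<forall>v. v \<notin> V \<longrightarrow> snd st v = 0) \<and>
     (\<forall>j\<in>I. pprd_super E \<alpha> F i j = fst st j + (\<Sum>v\<in>V. q j v * snd st v)))"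

lemma FInv_init: "i \<in> I \<Longrightarrow> FInv i (gfp_init E F i)"
proof -
  assume i: "i \<in> I"
  have "pprd_super E \<alpha> F i j = (\<Sum>v\<in>V. q j v * (if v \<in> F i then real (outdeg E v) / real (card (F i)) else 0))"
    if j: "j \<in> I" for j
  proof -
    have "(\<Sum>v\<in>V. q j v * (if v \<in> F i then real (outdeg E v) / real (card (F i)) else 0))
        = (\<Sum>v\<in>V. if v \<in> F i then q j v * real (outdeg E v) / real (card (F i)) else 0)"
      by (intro sum.cong) auto
    also have "\<dots> = (\<Sum>v\<in>V \<inter> F i. q j v * real (outdeg E v) / real (card (F i)))"
      using finV by (simp add: sum.inter_restrict)
    also have "V \<inter> F i = F i" using F_sub i by blast
    also have "(\<Sum>v\<in>F i. q j v * real (outdeg E v) / real (card (F i)))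
       = (\<Sum>v\<in>F i. \<Sum>t\<in>F j. pprd E \<alpha> v t) / (real (card (F i)) * real (card (F j)))"
      unfolding q_def pprd_def
      by (simp add: sum_divide_distrib sum_distrib_left sum_distrib_right mult_ac)
    finally show ?thesis unfolding pprd_super_def by simp
  qed
  then show ?thesis unfolding FInv_def gfp_init_def using F_sub i
    by (auto intro!: divide_nonneg_nonneg)
qed

lemma FInv_step:
  assumes inv: "FInv i st" and st: "gfp_step V E I F \<alpha> rmax st st'" and rmax: "rmax \<ge> 0"
  shows "FInv i st' \<and> (\<Sum>v\<in>V. snd st' v) \<le> (\<Sum>v\<in>V. snd st v) - \<alpha> * rmax"
proof -
  obtain h r where hr: "st = (h, r)" by (cases st)
  obtain h' r' where hr': "st' = (h', r')" by (cases st')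
  from st obtain vk where vk: "vk \<in> V" and big: "r vk > real (outdeg E vk) * rmax"
    and h': "h' = (\<lambda>j. if j \<in> I \<and> vk \<in> F j then h j + \<alpha> * r vk / real (card (F j)) else h j)"
    and r': "r' = (\<lambda>v. if v = vk then 0 else r v + (if v \<in> outN E vk
                       then (1 - \<alpha>) * r vk / real (outdeg E vk) else 0))"
    unfolding gfp_step_def hr hr' fst_conv snd_conv by blast
  define c where "c = (1 - \<alpha>) * r vk / real (outdeg E vk)"
  have dpos: "real (outdeg E vk) > 0" using d_pos[OF vk] .
  have d1: "real (outdeg E vk) \<ge> 1" using outdeg_pos vk by auto
  have rvk: "r vk \<ge> rmax" using big d1 rmax
    by (smt (verit) mult_right_mono mult_cancel_right1)
  have rpos: "r vk \<ge> 0" using big dpos rmax by (smt (verit) mult_nonneg_nonneg)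
  have cnn: "c \<ge> 0" unfolding c_def using rpos alpha1 dpos by simp
  have r'c: "r' = (\<lambda>v. if v = vk then 0 else r v + (if v \<in> outN E vk then c else 0))"
    unfolding r' c_def ..
  from inv have rnn: "\<forall>v. 0 \<le> r v" and rout: "\<forall>v. v \<notin> V \<longrightarrow> r v = 0"
    and req: "\<forall>j\<in>I. pprd_super E \<alpha> F i j = h j + (\<Sum>v\<in>V. q j v * r v)"
    unfolding FInv_def hr by auto
  have ps: "(\<Sum>v\<in>V. g v * r' v) = (\<Sum>v\<in>V. g v * r v) - g vk * r vk + (\<Sum>v\<in>outN E vk. g v * c)" for g
    unfolding r'c using push_sum[OF finV vk out_sub not_out_self, of g r "\<lambda>_. c"] by simp
  have sum1: "(\<Sum>v\<in>V. r' v) = (\<Sum>v\<in>V. r v) - \<alpha> * r vk"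
  proof -
    have "(\<Sum>v\<in>V. r' v) = (\<Sum>v\<in>V. r v) - r vk + real (card (outN E vk)) * c"
      using ps[of "\<lambda>_. 1"] by simp
    also have "real (card (outN E vk)) * c = (1 - \<alpha>) * r vk" unfolding card_out c_def using dpos by simp
    finally show ?thesis by (simp add: algebra_simps)
  qed
  have eqj: "pprd_super E \<alpha> F i j = h' j + (\<Sum>v\<in>V. q j v * r' v)" if j: "j \<in> I" for j
  proof -
    have "(\<Sum>v\<in>V. q j v * r' v) = (\<Sum>v\<in>V. q j v * r v) - q j vk * r vk + c * (\<Sum>v\<in>outN E vk. q j v)"
      using ps[of "q j"] by (simp add: sum_distrib_left mult_ac)
    also have "q j vk * r vk = \<alpha> * (if vk \<in> F j then 1 else 0) / real (card (F j)) * r vk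
        + c * (\<Sum>w\<in>outN E vk. q j w)"
      unfolding q_rec[OF j vk] c_def by (simp add: algebra_simps)
    finally have "(\<Sum>v\<in>V. q j v * r' v) = (\<Sum>v\<in>V. q j v * r v) - \<alpha> * (if vk \<in> F j then 1 else 0) / real (card (F j)) * r vk"
      by simp
    then show ?thesis using req j unfolding h' by auto
  qed
  have "FInv i st'" unfolding FInv_def hr' using eqj rnn rout cnn out_sub[of vk]
    by (auto simp: r'c subset_iff intro: add_nonneg_nonneg)
  moreover have "(\<Sum>v\<in>V. r' v) \<le> (\<Sum>v\<in>V. r v) - \<alpha> * rmax"
    using sum1 rvk alpha0 by (smt (verit) mult_left_mono)
  ultimately show ?thesis using hr hr' by simp
qed


definition BInv :: "'i \<Rightarrow> ('i \<Rightarrow> real) \<times> ('v \<Rightarrow> real) \<Rightarrow> bool" where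
  "BInv j st = ((\<forall>v. 0 \<le> snd st v) \<and> (\<forall>v. v \<notin> V \<longrightarrow> snd st v = 0) \<and>
     (\<forall>i\<in>I. pprd_super E \<alpha> F i j = fst st i +
        (\<Sum>s\<in>F i. real (outdeg E s) / real (card (F i)) * (\<Sum>v\<in>V. ppr E \<alpha> s v * snd st v))))"

definition Psi :: "('i \<Rightarrow> real) \<times> ('v \<Rightarrow> real) \<Rightarrow> real" where
  "Psi st = (\<Sum>s\<in>V. \<Sum>v\<in>V. ppr E \<alpha> s v * snd st v)"

lemma Psi_nonneg: "BInv j st \<Longrightarrow> Psi st \<ge> 0"
  unfolding Psi_def BInv_def by (auto intro!: sum_nonneg mult_nonneg_nonneg ppr_nonneg)

lemma BInv_init: "j \<in> I \<Longrightarrow> BInv j (gbp_init F j)"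
proof -
  assume j: "j \<in> I"
  have inner: "(\<Sum>v\<in>V. ppr E \<alpha> s v * (if v \<in> F j then 1 / real (card (F j)) else 0))
      = (\<Sum>t\<in>F j. ppr E \<alpha> s t) / real (card (F j))" for s
  proof -
    have "(\<Sum>v\<in>V. ppr E \<alpha> s v * (if v \<in> F j then 1 / real (card (F j)) else 0))
        = (\<Sum>v\<in>V. if v \<in> F j then ppr E \<alpha> s v / real (card (F j)) else 0)"
      by (intro sum.cong) auto
    also have "\<dots> = (\<Sum>v\<in>V \<inter> F j. ppr E \<alpha> s v / real (card (F j)))"
      using finV by (simp add: sum.inter_restrict)
    also have "V \<inter> F j = F j" using F_sub j by blast
    finally show ?thesis by (simp add: sum_divide_distrib)
  qed
  have "pprd_super E \<alpha> F i j = (\<Sum>s\<in>F i. real (outdeg E s) / real (card (F i)) *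
      ((\<Sum>t\<in>F j. ppr E \<alpha> s t) / real (card (F j))))" for i
    unfolding pprd_super_def pprd_def
    by (simp add: sum_divide_distrib sum_distrib_left sum_distrib_right mult_ac)
  then show ?thesis unfolding BInv_def gbp_init_def using F_sub j
    by (auto simp: inner)
qed

lemma per_s:
  assumes s: "s \<in> V" and vk: "vk \<in> V"
  shows "(\<Sum>v\<in>V. ppr E \<alpha> s v * (if v = vk then 0 else r v + (if v \<in> inN E vk
                         then (1 - \<alpha>) * r vk / real (outdeg E v) else 0)))
       = (\<Sum>v\<in>V. ppr E \<alpha> s v * r v) - \<alpha> * (if s = vk then 1 else 0) * r vk"
proof -
  have "(\<Sum>v\<in>V. ppr E \<alpha> s v * (if v = vk then 0 else r v + (if v \<in> inN E vk
                         then (1 - \<alpha>) * r vk / real (outdeg E v) else 0)))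
     = (\<Sum>v\<in>V. ppr E \<alpha> s v * r v) - ppr E \<alpha> s vk * r vk
       + (\<Sum>v\<in>inN E vk. ppr E \<alpha> s v * ((1 - \<alpha>) * r vk / real (outdeg E v)))"
    by (rule push_sum[OF finV vk in_sub not_in_self])
  also have "ppr E \<alpha> s vk * r vk = \<alpha> * (if s = vk then 1 else 0) * r vk
       + (\<Sum>v\<in>inN E vk. ppr E \<alpha> s v * ((1 - \<alpha>) * r vk / real (outdeg E v)))"
  proof -
    have "(1 - \<alpha>) * (\<Sum>x\<in>inN E vk. ppr E \<alpha> s x / real (outdeg E x)) * r vk
        = (\<Sum>x\<in>inN E vk. (1 - \<alpha>) * (ppr E \<alpha> s x / real (outdeg E x)) * r vk)"
      by (simp add: sum_distrib_left sum_distrib_right)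
    also have "\<dots> = (\<Sum>v\<in>inN E vk. ppr E \<alpha> s v * ((1 - \<alpha>) * r vk / real (outdeg E v)))"
      by (rule sum.cong) (simp_all add: mult_ac)
    finally have *: "(1 - \<alpha>) * (\<Sum>x\<in>inN E vk. ppr E \<alpha> s x / real (outdeg E x)) * r vk
        = (\<Sum>v\<in>inN E vk. ppr E \<alpha> s v * ((1 - \<alpha>) * r vk / real (outdeg E v)))" .
    show ?thesis by (subst ppr_bwd[OF s]) (simp only: distrib_right * )
  qed
  finally show ?thesis by simp
qed

lemma BInv_step:
  assumes inv: "BInv j st" and st: "gbp_step V E I F \<alpha> rb st st'" and rb: "rb \<ge> 0"
  shows "BInv j st' \<and> Psi st' \<le> Psi st - \<alpha> * rb"
proof -
  obtain h r where hr: "st = (h, r)" by (cases st)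
  obtain h' r' where hr': "st' = (h', r')" by (cases st')
  from st obtain vk where vk: "vk \<in> V" and big: "r vk > rb"
    and h': "h' = (\<lambda>i. if i \<in> I \<and> vk \<in> F i
                        then h i + \<alpha> * real (outdeg E vk) * r vk / real (card (F i)) else h i)"
    and r': "r' = (\<lambda>v. if v = vk then 0 else r v + (if v \<in> inN E vk
                       then (1 - \<alpha>) * r vk / real (outdeg E v) else 0))"
    unfolding gbp_step_def hr hr' fst_conv snd_conv by blast
  from inv have rnn: "\<forall>v. 0 \<le> r v" and rout: "\<forall>v. v \<notin> V \<longrightarrow> r v = 0"
    and req: "\<forall>i\<in>I. pprd_super E \<alpha> F i j = h i +
        (\<Sum>s\<in>F i. real (outdeg E s) / real (card (F i)) * (\<Sum>v\<in>V. ppr E \<alpha> s v * r v))"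
    unfolding BInv_def hr by auto
  have ps: "s \<in> V \<Longrightarrow> (\<Sum>v\<in>V. ppr E \<alpha> s v * r' v) = (\<Sum>v\<in>V. ppr E \<alpha> s v * r v) - \<alpha> * (if s = vk then 1 else 0) * r vk" for s
    unfolding r' by (rule per_s[OF _ vk])
  have eqi: "pprd_super E \<alpha> F i j = h' i +
        (\<Sum>s\<in>F i. real (outdeg E s) / real (card (F i)) * (\<Sum>v\<in>V. ppr E \<alpha> s v * r' v))" if i: "i \<in> I" for i
  proof -
    have "(\<Sum>s\<in>F i. real (outdeg E s) / real (card (F i)) * (\<Sum>v\<in>V. ppr E \<alpha> s v * r' v))
       = (\<Sum>s\<in>F i. real (outdeg E s) / real (card (F i)) * (\<Sum>v\<in>V. ppr E \<alpha> s v * r v)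
          - (if s = vk then real (outdeg E vk) / real (card (F i)) * \<alpha> * r vk else 0))"
    proof (rule sum.cong[OF refl])
      fix s assume "s \<in> F i"
      then have "s \<in> V" using F_sub i by auto
      then show "real (outdeg E s) / real (card (F i)) * (\<Sum>v\<in>V. ppr E \<alpha> s v * r' v)
        = real (outdeg E s) / real (card (F i)) * (\<Sum>v\<in>V. ppr E \<alpha> s v * r v)
          - (if s = vk then real (outdeg E vk) / real (card (F i)) * \<alpha> * r vk else 0)"
        by (simp add: ps right_diff_distrib)
    qed
    also have "\<dots> = (\<Sum>s\<in>F i. real (outdeg E s) / real (card (F i)) * (\<Sum>v\<in>V. ppr E \<alpha> s v * r v))
          - (if vk \<in> F i then real (outdeg E vk) / real (card (F i)) * \<alpha> * r vk else 0)"
      using finF[OF i] by (simp add: sum_subtractf)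
    finally show ?thesis using req i unfolding h' by auto
  qed
  have rpos: "r vk \<ge> 0" using rnn by auto
  have "BInv j st'" unfolding BInv_def hr' using eqi rnn rout in_sub[of vk] rpos alpha1 d_pos
    by (auto simp: r' subset_iff intro!: add_nonneg_nonneg divide_nonneg_nonneg)
  moreover have "Psi st' = Psi st - \<alpha> * r vk"
  proof -
    have "Psi st' = (\<Sum>s\<in>V. (\<Sum>v\<in>V. ppr E \<alpha> s v * r v) - \<alpha> * (if s = vk then 1 else 0) * r vk)"
      unfolding Psi_def hr' by (intro sum.cong) (auto simp: ps)
    also have "\<dots> = Psi st - \<alpha> * r vk" unfolding Psi_def hr using finV vk
      by (simp add: sum_subtractf if_distrib[of "\<lambda>x. \<alpha> * x * r vk"] cong: if_cong)
    finally show ?thesis .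
  qed
  moreover have "\<alpha> * rb \<le> \<alpha> * r vk" using big alpha0 by simp
  ultimately show ?thesis using hr' by simp
qed

end

theorem theorem3:
  fixes V :: "'v set" and E :: "('v \<times> 'v) set" and \<alpha> :: real
    and I :: "'i set" and F :: "'i \<Rightarrow> 'v set"
    and \<epsilon> \<delta> \<tau> :: real
  assumes finV: "finite V"
    and EV: "E \<subseteq> V \<times> V"
    and noloop: "\<forall>v. (v, v) \<notin> E"
    and outdeg_pos: "\<forall>v\<in>V. outdeg E v \<ge> 1"
    and alpha: "0 < \<alpha>" "\<alpha> < 1"
    and finI: "finite I"
    and cardI: "card I \<ge> 2"
    and F_ne: "\<forall>i\<in>I. F i \<noteq> {}"
    and F_sub: "\<forall>i\<in>I. F i \<subseteq> V"
    and F_disj: "\<forall>i\<in>I. \<forall>j\<in>I. i \<noteq> j \<longrightarrow> F i \<inter> F j = {}"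
    and pos: "\<epsilon> > 0" "\<delta> > 0" "\<tau> > 0"
  shows
    "(\<forall>i\<in>I. terminates (gfp_step V E I F \<alpha> (rmax_tau E \<epsilon> \<delta> \<tau>)) (gfp_init E F i))
     \<and> (\<forall>j\<in>I. dpr V E \<alpha> F j > \<tau> \<longrightarrow>
           terminates (gbp_step V E I F \<alpha> (rbmax_tau E I F \<epsilon> \<delta> j)) (gbp_init F j))
     \<and> (\<forall>hf hb.
          (\<forall>i\<in>I. gfp_output V E I F \<alpha> (rmax_tau E \<epsilon> \<delta> \<tau>) i (hf i)) \<longrightarrow>
          (\<forall>j\<in>I. dpr V E \<alpha> F j > \<tau> \<longrightarrow> gbp_output V E I F \<alpha> (rbmax_tau E I F \<epsilon> \<delta> j) j (hb j)) \<longrightarrow>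
          (\<forall>i\<in>I. \<forall>j\<in>I. i \<noteq> j \<longrightarrow>
             approx \<epsilon> \<delta> (if dpr V E \<alpha> F j > \<tau> then hb j i else hf i j) (pprd_super E \<alpha> F i j)))"
proof -
  interpret G2 V E \<alpha> I F
    using finV EV noloop outdeg_pos alpha finI F_ne F_sub by unfold_locales auto
  obtain i0 where i0: "i0 \<in> I" using cardI by (metis card.empty ex_in_conv not_numeral_le_zero)
  obtain v0 where v0: "v0 \<in> V" using F_ne F_sub i0 by blast
  have "outN E v0 \<noteq> {}" using outdeg_pos v0 unfolding outdeg_def by force
  then have "E \<noteq> {}" unfolding outN_def by auto
  moreover have "finite E" using EV finV by (meson finite_SigmaI finite_subset)
  ultimately have cE: "real (card E) > 0" by (simp add: card_gt_0_iff)
  define rmax where "rmax = rmax_tau E \<epsilon> \<delta> \<tau>"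
  have rmax_pos: "rmax > 0" unfolding rmax_def rmax_tau_def using cE pos by simp
  define A where "A i = (\<Sum>s\<in>F i. real (outdeg E s)) / real (card (F i))" for i
  have A_pos: "A i > 0" if "i \<in> I" for i
  proof -
    have "(\<Sum>s\<in>F i. real (outdeg E s)) > 0"
      using that F_ne F_sub finF d_pos by (intro sum_pos) (auto simp: subset_iff)
    then show ?thesis unfolding A_def using cardF[OF that] by simp
  qed
  have rb_props: "rbmax_tau E I F \<epsilon> \<delta> j > 0 \<and> (\<forall>i\<in>I. i \<noteq> j \<longrightarrow> rbmax_tau E I F \<epsilon> \<delta> j * A i \<le> \<epsilon> * \<delta>)"
    if j: "j \<in> I" for j
  proof -
    obtain i1 where i1: "i1 \<in> I" "i1 \<noteq> j"
    proof -
      have "card (I - {j}) \<ge> 1" using cardI j finI by (simp add: card_Diff_singleton)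
      then obtain x where "x \<in> I - {j}" by (metis card.empty ex_in_conv not_one_le_zero)
      then show ?thesis using that by auto
    qed
    define M where "M = Max (A ` (I - {j}))"
    have Mge: "A i \<le> M" if "i \<in> I" "i \<noteq> j" for i
      unfolding M_def using that finI by (intro Max_ge) auto
    have Mpos: "M > 0" using Mge[OF i1] A_pos[OF i1(1)] by linarith
    have rb: "rbmax_tau E I F \<epsilon> \<delta> j = \<epsilon> * \<delta> / M"
      unfolding rbmax_tau_def M_def A_def ..
    have "\<epsilon> * \<delta> / M * A i \<le> \<epsilon> * \<delta>" if "i \<in> I" "i \<noteq> j" for i
    proof -
      have "A i / M \<le> 1" using Mge[OF that] Mpos by simp
      then have "\<epsilon> * \<delta> * (A i / M) \<le> \<epsilon> * \<delta> * 1" using pos by (intro mult_left_mono) auto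
      then show ?thesis by simp
    qed
    then show ?thesis using rb Mpos pos by simp
  qed
  have T1: "\<forall>i\<in>I. terminates (gfp_step V E I F \<alpha> rmax) (gfp_init E F i)"
  proof
    fix i assume i: "i \<in> I"
    show "terminates (gfp_step V E I F \<alpha> rmax) (gfp_init E F i)"
    proof (rule terminates_pot[where Q = "FInv i" and \<Phi> = "\<lambda>st. \<Sum>v\<in>V. snd st v" and c = "\<alpha> * rmax"])
      show "FInv i (gfp_init E F i)" using FInv_init[OF i] .
      show "FInv i s'" if "FInv i s" "gfp_step V E I F \<alpha> rmax s s'" for s s'
        using FInv_step[OF that] rmax_pos by simp
      show "0 \<le> (\<Sum>v\<in>V. snd s v)" if "FInv i s" for s
        using that unfolding FInv_def by (auto intro: sum_nonneg)
      show "(\<Sum>v\<in>V. snd s' v) \<le> (\<Sum>v\<in>V. snd s v) - \<alpha> * rmax" if "FInv i s" "gfp_step V E I F \<alpha> rmax s s'" for s s'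
        using FInv_step[OF that] rmax_pos by simp
      show "0 < \<alpha> * rmax" using rmax_pos alpha by simp
    qed
  qed
  have T2: "\<forall>j\<in>I. terminates (gbp_step V E I F \<alpha> (rbmax_tau E I F \<epsilon> \<delta> j)) (gbp_init F j)"
  proof
    fix j assume j: "j \<in> I"
    define rb where "rb = rbmax_tau E I F \<epsilon> \<delta> j"
    have rbpos: "rb > 0" using rb_props[OF j] unfolding rb_def by simp
    show "terminates (gbp_step V E I F \<alpha> (rbmax_tau E I F \<epsilon> \<delta> j)) (gbp_init F j)"
      unfolding rb_def[symmetric]
    proof (rule terminates_pot[where Q = "BInv j" and \<Phi> = Psi and c = "\<alpha> * rb"])
      show "BInv j (gbp_init F j)" using BInv_init[OF j] .
      show "BInv j s'" if "BInv j s" "gbp_step V E I F \<alpha> rb s s'" for s s'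
        using BInv_step[OF that] rbpos by simp
      show "0 \<le> Psi s" if "BInv j s" for s using Psi_nonneg[OF that] .
      show "Psi s' \<le> Psi s - \<alpha> * rb" if "BInv j s" "gbp_step V E I F \<alpha> rb s s'" for s s'
        using BInv_step[OF that] rbpos by simp
      show "0 < \<alpha> * rb" using rbpos alpha by simp
    qed
  qed
  have T3: "approx \<epsilon> \<delta> (if dpr V E \<alpha> F j > \<tau> then hb j i else hf i j) (pprd_super E \<alpha> F i j)"
    if hf: "\<forall>i\<in>I. gfp_output V E I F \<alpha> rmax i (hf i)"
    and hb: "\<forall>j\<in>I. dpr V E \<alpha> F j > \<tau> \<longrightarrow> gbp_output V E I F \<alpha> (rbmax_tau E I F \<epsilon> \<delta> j) j (hb j)"
    and i: "i \<in> I" and j: "j \<in> I" and ij: "i \<noteq> j" for hf hb i j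
  proof (cases "dpr V E \<alpha> F j > \<tau>")
    case True
    define rb where "rb = rbmax_tau E I F \<epsilon> \<delta> j"
    have rbpos: "rb > 0" and rbA: "rb * A i \<le> \<epsilon> * \<delta>" using rb_props[OF j] i ij unfolding rb_def by auto
    obtain r where reach: "(gbp_step V E I F \<alpha> rb)\<^sup>*\<^sup>* (gbp_init F j) (hb j, r)"
      and fin: "\<not> (\<exists>st'. gbp_step V E I F \<alpha> rb (hb j, r) st')"
      using hb j True unfolding gbp_output_def rb_def by blast
    have inv: "BInv j (hb j, r)"
      by (rule reach_inv[where Q = "BInv j", OF reach BInv_init[OF j]]) (use BInv_step rbpos in auto)
    have small: "\<forall>v\<in>V. r v \<le> rb"
    proof (rule ccontr)
      assume "\<not> (\<forall>v\<in>V. r v \<le> rb)"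
      then obtain vk where vk: "vk \<in> V" "r vk > rb" by (auto simp: not_le)
      have "gbp_step V E I F \<alpha> rb (hb j, r)
        ((\<lambda>i. if i \<in> I \<and> vk \<in> F i then hb j i + \<alpha> * real (outdeg E vk) * r vk / real (card (F i)) else hb j i),
         (\<lambda>v. if v = vk then 0 else r v + (if v \<in> inN E vk then (1 - \<alpha>) * r vk / real (outdeg E v) else 0)))"
        unfolding gbp_step_def fst_conv snd_conv using vk by (intro bexI[of _ vk]) auto
      then show False using fin by blast
    qed
    from inv have rnn: "\<forall>v. 0 \<le> r v" and req: "pprd_super E \<alpha> F i j = hb j i +
        (\<Sum>s\<in>F i. real (outdeg E s) / real (card (F i)) * (\<Sum>v\<in>V. ppr E \<alpha> s v * r v))"
      unfolding BInv_def using i by auto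
    define err where "err = (\<Sum>s\<in>F i. real (outdeg E s) / real (card (F i)) * (\<Sum>v\<in>V. ppr E \<alpha> s v * r v))"
    have FiV: "F i \<subseteq> V" using F_sub i by auto
    have "err \<ge> 0" unfolding err_def using FiV rnn
      by (intro sum_nonneg mult_nonneg_nonneg divide_nonneg_nonneg ppr_nonneg) auto
    moreover have "err \<le> rb * A i"
    proof -
      have "err \<le> (\<Sum>s\<in>F i. real (outdeg E s) / real (card (F i)) * (\<Sum>v\<in>V. ppr E \<alpha> s v * rb))"
        unfolding err_def
      proof (rule sum_mono)
        fix s assume s: "s \<in> F i"
        have "(\<Sum>v\<in>V. ppr E \<alpha> s v * r v) \<le> (\<Sum>v\<in>V. ppr E \<alpha> s v * rb)"
          using small s FiV by (intro sum_mono mult_left_mono ppr_nonneg) auto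
        then show "real (outdeg E s) / real (card (F i)) * (\<Sum>v\<in>V. ppr E \<alpha> s v * r v)
             \<le> real (outdeg E s) / real (card (F i)) * (\<Sum>v\<in>V. ppr E \<alpha> s v * rb)"
          by (intro mult_left_mono) auto
      qed
      also have "\<dots> = (\<Sum>s\<in>F i. real (outdeg E s) / real (card (F i)) * rb)"
        using FiV by (intro sum.cong refl) (auto simp: sum_distrib_right[symmetric] ppr_sum)
      also have "\<dots> = rb * A i" unfolding A_def sum_divide_distrib sum_distrib_left
        by (rule sum.cong) (simp_all add: mult_ac)
      finally show ?thesis .
    qed
    ultimately show ?thesis using True req rbA pos unfolding err_def
      by (intro approx_intro) auto
  next
    case False
    obtain r where reach: "(gfp_step V E I F \<alpha> rmax)\<^sup>*\<^sup>* (gfp_init E F i) (hf i, r)"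
      and fin: "\<not> (\<exists>st'. gfp_step V E I F \<alpha> rmax (hf i, r) st')"
      using hf i unfolding gfp_output_def by blast
    have inv: "FInv i (hf i, r)"
      by (rule reach_inv[where Q = "FInv i", OF reach FInv_init[OF i]]) (use FInv_step rmax_pos in auto)
    have small: "\<forall>v\<in>V. r v \<le> real (outdeg E v) * rmax"
    proof (rule ccontr)
      assume "\<not> (\<forall>v\<in>V. r v \<le> real (outdeg E v) * rmax)"
      then obtain vk where vk: "vk \<in> V" "r vk > real (outdeg E vk) * rmax" by (auto simp: not_le)
      have "gfp_step V E I F \<alpha> rmax (hf i, r)
        ((\<lambda>j. if j \<in> I \<and> vk \<in> F j then hf i j + \<alpha> * r vk / real (card (F j)) else hf i j),
         (\<lambda>v. if v = vk then 0 else r v + (if v \<in> outN E vk then (1 - \<alpha>) * r vk / real (outdeg E vk) else 0)))"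
        unfolding gfp_step_def fst_conv snd_conv using vk by (intro bexI[of _ vk]) auto
      then show False using fin by blast
    qed
    from inv have rnn: "\<forall>v. 0 \<le> r v" and req: "pprd_super E \<alpha> F i j = hf i j + (\<Sum>v\<in>V. q j v * r v)"
      unfolding FInv_def using j by auto
    define err where "err = (\<Sum>v\<in>V. q j v * r v)"
    have "err \<ge> 0" unfolding err_def using rnn q_nonneg by (auto intro!: sum_nonneg)
    moreover have "err \<le> \<epsilon> * \<delta>"
    proof -
      have "err \<le> (\<Sum>v\<in>V. q j v * (real (outdeg E v) * rmax))"
        unfolding err_def using small q_nonneg by (intro sum_mono mult_left_mono) auto
      also have "\<dots> = rmax * (\<Sum>v\<in>V. real (outdeg E v) * q j v)"
        by (simp add: sum_distrib_left mult_ac)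
      also have "(\<Sum>v\<in>V. real (outdeg E v) * q j v) = real (card E) * dpr V E \<alpha> F j"
      proof -
        have "(\<Sum>v\<in>V. real (outdeg E v) * q j v) = (\<Sum>v\<in>V. \<Sum>t\<in>F j. pprd E \<alpha> v t) / real (card (F j))"
          unfolding q_def pprd_def by (simp add: sum_divide_distrib sum_distrib_left)
        also have "\<dots> = (\<Sum>t\<in>F j. \<Sum>v\<in>V. pprd E \<alpha> v t) / real (card (F j))"
          by (simp add: sum.swap[of _ V])
        finally show ?thesis unfolding dpr_def using cE cardF[OF j] by simp
      qed
      also have "rmax * (real (card E) * dpr V E \<alpha> F j) = \<epsilon> * \<delta> * (dpr V E \<alpha> F j / \<tau>)"
        unfolding rmax_def rmax_tau_def using cE pos by simp
      also have "\<dots> \<le> \<epsilon> * \<delta> * 1" using False pos by (intro mult_left_mono) auto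
      finally show ?thesis by simp
    qed
    ultimately show ?thesis using False req pos unfolding err_def
      by (intro approx_intro) auto
  qed
  show ?thesis using T1 T2 T3 unfolding rmax_def by blast
qed

end
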